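(* Let $p\in[0,1]$ satisfy $p\ge_T\emptyset'$. Then there is $y\notin\mathsf{MLR}_{\mu_p}$ and a constant $c$ such that $\mathit{KA}(y\upharpoonright n)\ge-\log\mu_p(y\upharpoonright n)-c$ for all $n$.
   Context: For $p\in[0,1]$ the Bernoulli measure $\mu_p$ on $2^\omega$ is determined by $\mu_p(\sigma)=p^{\#_0(\sigma)}(1-p)^{\#_1(\sigma)}$, where $\#_i(\sigma)$ is the number of occurrences of $i$ in $\sigma$; $p$ is identified with its binary expansion. $\mathsf{MLR}_{\mu_p}$ is the set of sequences Martin-Löf random for $\mu_p$ relative to oracle $p$. A semimeasure is $\rho:2^{<\omega}\to[0,1]$ with $\rho(\emptyset)\le1$ and $\rho(\sigma)\ge\rho(\sigma0)+\rho(\sigma1)$; it is left-c.e. if its values are uniformly limits of computable nondecreasing sequences of rationals. $M$ is a universal left-c.e. semimeasure (for every left-c.e. semimeasure $\rho$ there is $c>0$ with $M\ge c\rho$), and the a priori complexity is $\mathit{KA}(\sigma)=-\log M(\sigma)$ (unrelativized). $y\upharpoonright n$ is the length-$n$ prefix of $y$. *)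

theory Defs
  imports Complex_Main "HOL-Library.Nat_Bijection"
begin

datatype recf =
    Zer
  | Suc_f
  | Proj nat
  | Orc
  | Cn recf "recf list"
  | Pr recf recf
  | Mn recf

inductive ev :: "(nat \<Rightarrow> bool) \<Rightarrow> recf \<Rightarrow> nat list \<Rightarrow> nat \<Rightarrow> bool"
  for A :: "nat \<Rightarrow> bool" where
  ev_zer: "ev A Zer xs 0"
| ev_suc: "ev A Suc_f (x # xs) (Suc x)"
| ev_proj: "i < length xs \<Longrightarrow> ev A (Proj i) xs (xs ! i)"
| ev_orc: "ev A Orc (x # xs) (if A x then 1 else 0)"
| ev_cn: "list_all2 (\<lambda>g y. ev A g xs y) gs ys \<Longrightarrow> ev A f ys r \<Longrightarrow> ev A (Cn f gs) xs r"
| ev_pr0: "ev A f xs r \<Longrightarrow> ev A (Pr f g) (0 # xs) r"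
| ev_prS: "ev A (Pr f g) (n # xs) r \<Longrightarrow> ev A g (n # r # xs) r'
           \<Longrightarrow> ev A (Pr f g) (Suc n # xs) r'"
| ev_mn: "ev A f (n # xs) 0 \<Longrightarrow> (\<forall>m<n. \<exists>v. 0 < v \<and> ev A f (m # xs) v)
           \<Longrightarrow> ev A (Mn f) xs n"

definition computable_in :: "(nat \<Rightarrow> bool) \<Rightarrow> (nat \<Rightarrow> nat) \<Rightarrow> bool" where
  "computable_in A f \<longleftrightarrow> (\<exists>c. \<forall>x. ev A c [x] (f x))"

definition turing_le :: "(nat \<Rightarrow> bool) \<Rightarrow> (nat \<Rightarrow> bool) \<Rightarrow> bool" where
  "turing_le B A \<longleftrightarrow> computable_in A (\<lambda>x. if B x then 1 else 0)"

definition ce_in :: "(nat \<Rightarrow> bool) \<Rightarrow> nat set \<Rightarrow> bool" where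
  "ce_in A S \<longleftrightarrow> (\<exists>c. \<forall>x. x \<in> S \<longleftrightarrow> (\<exists>r. ev A c [x] r))"

fun encode :: "recf \<Rightarrow> nat" where
  "encode Zer = prod_encode (0, 0)"
| "encode Suc_f = prod_encode (1, 0)"
| "encode (Proj i) = prod_encode (2, i)"
| "encode Orc = prod_encode (3, 0)"
| "encode (Cn f gs) = prod_encode (4, prod_encode (encode f, list_encode (map encode gs)))"
| "encode (Pr f g) = prod_encode (5, prod_encode (encode f, encode g))"
| "encode (Mn f) = prod_encode (6, encode f)"

text \<open>The halting problem \<emptyset>' (unrelativized: empty oracle).\<close>
definition halting :: "nat \<Rightarrow> bool" where
  "halting e \<longleftrightarrow> (\<exists>c. encode c = e \<and> (\<exists>r. ev (\<lambda>_. False) c [e] r))"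

type_synonym bstring = "bool list"   \<comment> \<open>False = 0, True = 1\<close>

definition prefix :: "(nat \<Rightarrow> bool) \<Rightarrow> nat \<Rightarrow> bstring" where
  "prefix y n = map y [0..<n]"

definition code_str :: "bstring \<Rightarrow> nat" where
  "code_str \<sigma> = list_encode (map (\<lambda>b. if b then 1 else 0) \<sigma>)"

text \<open>Binary expansion of a real p in [0,1]: bit n is the (n+1)-st binary digit.\<close>
definition pbits :: "real \<Rightarrow> nat \<Rightarrow> bool" where
  "pbits p n = odd \<lfloor>p * 2 ^ (Suc n)\<rfloor>"

definition mu :: "real \<Rightarrow> bstring \<Rightarrow> real" where
  "mu p \<sigma> = p ^ length (filter Not \<sigma>) * (1 - p) ^ length (filter id \<sigma>)"

definition prefix_free :: "bstring set \<Rightarrow> bool" where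
  "prefix_free F \<longleftrightarrow> (\<forall>\<sigma>\<in>F. \<forall>\<tau>\<in>F. \<sigma> \<noteq> \<tau> \<longrightarrow> \<not> (\<exists>\<rho>. \<tau> = \<sigma> @ \<rho>))"

text \<open>mu_p of the open set generated by U is at most r: the measure of [U] is the
  sum of mu_p over the (prefix-free) minimal elements of U, i.e. the supremum of sums
  over finite prefix-free subsets of U.\<close>
definition open_measure_le :: "real \<Rightarrow> bstring set \<Rightarrow> real \<Rightarrow> bool" where
  "open_measure_le p U r \<longleftrightarrow>
     (\<forall>F. finite F \<longrightarrow> F \<subseteq> U \<longrightarrow> prefix_free F \<longrightarrow> (\<Sum>\<sigma>\<in>F. mu p \<sigma>) \<le> r)"

definition martin_loef_test :: "real \<Rightarrow> (nat \<Rightarrow> bstring set) \<Rightarrow> bool" where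
  "martin_loef_test p U \<longleftrightarrow>
     ce_in (pbits p) {prod_encode (k, code_str \<sigma>) | k \<sigma>. \<sigma> \<in> U k} \<and>
     (\<forall>k. open_measure_le p (U k) ((1/2) ^ k))"

definition mlr :: "real \<Rightarrow> (nat \<Rightarrow> bool) set" where
  "mlr p = {y. \<not> (\<exists>U. martin_loef_test p U \<and> (\<forall>k. \<exists>n. prefix y n \<in> U k))}"

definition semimeasure :: "(bstring \<Rightarrow> real) \<Rightarrow> bool" where
  "semimeasure \<rho> \<longleftrightarrow> (\<forall>\<sigma>. 0 \<le> \<rho> \<sigma> \<and> \<rho> \<sigma> \<le> 1) \<and> \<rho> [] \<le> 1 \<and>
     (\<forall>\<sigma>. \<rho> (\<sigma> @ [False]) + \<rho> (\<sigma> @ [True]) \<le> \<rho> \<sigma>)"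

text \<open>The rational q(sigma,s) is
  (a x - b x) / (d x + 1) for x = <code sigma, s> and computable a, b, d.\<close>
definition left_ce :: "(bstring \<Rightarrow> real) \<Rightarrow> bool" where
  "left_ce \<rho> \<longleftrightarrow> (\<exists>a b d.
     computable_in (\<lambda>_. False) a \<and> computable_in (\<lambda>_. False) b \<and>
     computable_in (\<lambda>_. False) d \<and>
     (\<forall>\<sigma>. let q = (\<lambda>s. (real (a (prod_encode (code_str \<sigma>, s))) - real (b (prod_encode (code_str \<sigma>, s))))
                      / real (Suc (d (prod_encode (code_str \<sigma>, s))))) in
           incseq q \<and> q \<longlonglongrightarrow> \<rho> \<sigma>))"

definition left_ce_semimeasure :: "(bstring \<Rightarrow> real) \<Rightarrow> bool" where
  "left_ce_semimeasure \<rho> \<longleftrightarrow> semimeasure \<rho> \<and> left_ce \<rho>"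

definition universal_semimeasure :: "(bstring \<Rightarrow> real) \<Rightarrow> bool" where
  "universal_semimeasure M \<longleftrightarrow> left_ce_semimeasure M \<and>
     (\<forall>\<rho>. left_ce_semimeasure \<rho> \<longrightarrow> (\<exists>c>0. \<forall>\<sigma>. M \<sigma> \<ge> c * \<rho> \<sigma>))"

definition KA :: "(bstring \<Rightarrow> real) \<Rightarrow> bstring \<Rightarrow> real" where
  "KA M \<sigma> = - log 2 (M \<sigma>)"

end

theory Submission
  imports Defs
begin

lemma ev_det: "ev A c xs r \<Longrightarrow> ev A c xs r' \<Longrightarrow> r = r'"
proof (induction arbitrary: r' rule: ev.induct)
  case (ev_cn xs gs ys f r)
  from ev_cn.prems obtain ys' where ys': "list_all2 (\<lambda>g y. ev A g xs y) gs ys'" "ev A f ys' r'"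
    by (cases rule: ev.cases) auto
  have "ys = ys'" using ev_cn.IH(1) ys'(1)
  proof (induction gs arbitrary: ys ys')
    case Nil then show ?case by auto
  next
    case (Cons g gs)
    then show ?case by (auto simp: list_all2_Cons1)
  qed
  then show ?case using ev_cn ys' by auto
next
  case (ev_prS f g n xs r r2)
  from ev_prS.prems obtain r3 where "ev A (Pr f g) (n # xs) r3" "ev A g (n # r3 # xs) r'"
    by (cases rule: ev.cases) auto
  then show ?case using ev_prS.IH by auto
next
  case (ev_pr0 f xs r)
  from ev_pr0.prems have "ev A f xs r'" by (cases rule: ev.cases) auto
  then show ?case using ev_pr0.IH by auto
next
  case (ev_mn f n xs r')
  from ev_mn.prems obtain n' where h: "ev A f (n' # xs) 0" "\<forall>m<n'. \<exists>v>0. ev A f (m # xs) v" "r' = n'"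
    by (cases rule: ev.cases) auto
  have IH1: "\<And>r2. ev A f (n # xs) r2 \<Longrightarrow> 0 = r2" using ev_mn.IH(1) by blast
  show ?case
  proof (rule ccontr)
    assume "n \<noteq> r'"
    then consider "n < n'" | "n' < n" using h by linarith
    then show False
    proof cases
      case 1 then obtain v where "v>0" "ev A f (n # xs) v" using h(2) by blast
      then show False using IH1 by force
    next
      case 2 then obtain v where v: "v>0" "ev A f (n' # xs) v \<and> (\<forall>r'. ev A f (n' # xs) r' \<longrightarrow> v = r')"
        using ev_mn.IH(2) by blast
      then show False using h(1) by force
    qed
  qed
next
  case ev_zer from ev_zer.prems show ?case by (cases rule: ev.cases) auto
next
  case ev_suc from ev_suc.prems show ?case by (cases rule: ev.cases) auto
next
  case ev_proj from ev_proj.prems show ?case by (cases rule: ev.cases) auto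
next
  case ev_orc from ev_orc.prems show ?case by (cases rule: ev.cases) auto
qed

definition rcomp :: "(nat \<Rightarrow> bool) \<Rightarrow> nat \<Rightarrow> (nat list \<Rightarrow> nat) \<Rightarrow> bool" where
  "rcomp A k f \<longleftrightarrow> (\<exists>c. \<forall>xs. length xs = k \<longrightarrow> ev A c xs (f xs))"

lemma comp_cong: "rcomp A k f \<Longrightarrow> (\<And>xs. length xs = k \<Longrightarrow> f xs = g xs) \<Longrightarrow> rcomp A k g"
  unfolding rcomp_def by metis

fun Kc :: "nat \<Rightarrow> recf" where
  "Kc 0 = Zer" | "Kc (Suc n) = Cn Suc_f [Kc n]"

lemma ev_Kc: "ev A (Kc n) xs n"
  by (induction n) (auto intro: ev.intros)

lemma comp_const: "rcomp A k (\<lambda>_. n)"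
  unfolding rcomp_def using ev_Kc by blast

lemma comp_proj: "i < k \<Longrightarrow> rcomp A k (\<lambda>xs. xs ! i)"
  unfolding rcomp_def by (auto intro: ev.intros)

lemma comp_list: "\<forall>g\<in>set gs. rcomp A k g \<Longrightarrow>
   \<exists>cs. \<forall>xs. length xs = k \<longrightarrow> list_all2 (\<lambda>c v. ev A c xs v) cs (map (\<lambda>g. g xs) gs)"
proof (induction gs)
  case Nil then show ?case by auto
next
  case (Cons g gs)
  then obtain cs where cs: "\<forall>xs. length xs = k \<longrightarrow> list_all2 (\<lambda>c v. ev A c xs v) cs (map (\<lambda>g. g xs) gs)" by auto
  from Cons obtain c where "\<forall>xs. length xs = k \<longrightarrow> ev A c xs (g xs)" unfolding rcomp_def by auto
  then show ?case using cs by (intro exI[of _ "c # cs"]) auto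
qed

lemma comp_cn: "rcomp A (length gs) f \<Longrightarrow> \<forall>g\<in>set gs. rcomp A k g \<Longrightarrow>
   rcomp A k (\<lambda>xs. f (map (\<lambda>g. g xs) gs))"
proof -
  assume f: "rcomp A (length gs) f" and g: "\<forall>g\<in>set gs. rcomp A k g"
  from comp_list[OF g] obtain cs where cs: "\<forall>xs. length xs = k \<longrightarrow> list_all2 (\<lambda>c v. ev A c xs v) cs (map (\<lambda>g. g xs) gs)" by auto
  from f obtain c where c: "\<forall>ys. length ys = length gs \<longrightarrow> ev A c ys (f ys)" unfolding rcomp_def by auto
  show ?thesis unfolding rcomp_def
    by (rule exI[of _ "Cn c cs"]) (auto intro!: ev_cn cs[rule_format] c[rule_format])
qed

lemma comp1: "rcomp A 1 (\<lambda>xs. g (xs!0)) \<Longrightarrow> rcomp A k f1 \<Longrightarrow> rcomp A k (\<lambda>xs. g (f1 xs))"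
  using comp_cn[of A "[f1]" "\<lambda>xs. g (xs!0)" k] by auto

lemma comp2: "rcomp A 2 (\<lambda>xs. g (xs!0) (xs!1)) \<Longrightarrow> rcomp A k f1 \<Longrightarrow> rcomp A k f2 \<Longrightarrow>
  rcomp A k (\<lambda>xs. g (f1 xs) (f2 xs))"
  using comp_cn[of A "[f1,f2]" "\<lambda>xs. g (xs!0) (xs!1)" k] by (auto simp: numeral_2_eq_2)

lemma comp3: "rcomp A 3 (\<lambda>xs. g (xs!0) (xs!1) (xs!2)) \<Longrightarrow> rcomp A k f1 \<Longrightarrow> rcomp A k f2 \<Longrightarrow>
  rcomp A k f3 \<Longrightarrow> rcomp A k (\<lambda>xs. g (f1 xs) (f2 xs) (f3 xs))"
  using comp_cn[of A "[f1,f2,f3]" "\<lambda>xs. g (xs!0) (xs!1) (xs!2)" k] by (auto simp: numeral_3_eq_3)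

lemma ev_Pr: "(\<forall>xs. length xs = k \<longrightarrow> ev A cg xs (g xs)) \<Longrightarrow>
   (\<forall>xs. length xs = Suc (Suc k) \<longrightarrow> ev A ch xs (h xs)) \<Longrightarrow> length xs = k \<Longrightarrow>
   ev A (Pr cg ch) (n # xs) (rec_nat (g xs) (\<lambda>m r. h (m # r # xs)) n)"
  by (induction n) (auto intro: ev.intros)

lemma comp_pr: "rcomp A k g \<Longrightarrow> rcomp A (Suc (Suc k)) h \<Longrightarrow>
  rcomp A (Suc k) (\<lambda>xs. rec_nat (g (tl xs)) (\<lambda>m r. h (m # r # tl xs)) (hd xs))"
proof -
  assume "rcomp A k g" "rcomp A (Suc (Suc k)) h"
  then obtain cg ch where "\<forall>xs. length xs = k \<longrightarrow> ev A cg xs (g xs)"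
     "\<forall>xs. length xs = Suc (Suc k) \<longrightarrow> ev A ch xs (h xs)" unfolding rcomp_def by blast
  then show ?thesis unfolding rcomp_def
    apply (intro exI[of _ "Pr cg ch"] allI impI)
    subgoal for xs by (cases xs) (auto intro: ev_Pr)
    done
qed

lemma comp_mn: "rcomp A (Suc k) f \<Longrightarrow> (\<And>xs. length xs = k \<Longrightarrow> \<exists>n. f (n # xs) = 0) \<Longrightarrow>
  rcomp A k (\<lambda>xs. LEAST n. f (n # xs) = 0)"
proof -
  assume f: "rcomp A (Suc k) f" and ex: "\<And>xs. length xs = k \<Longrightarrow> \<exists>n. f (n # xs) = 0"
  then obtain c where c: "\<And>xs. length xs = Suc k \<Longrightarrow> ev A c xs (f xs)" unfolding rcomp_def by blast
  show ?thesis unfolding rcomp_def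
  proof (intro exI[of _ "Mn c"] allI impI)
    fix xs :: "nat list" assume l: "length xs = k"
    define N where "N = (LEAST n. f (n # xs) = 0)"
    have z: "f (N # xs) = 0" using ex[OF l] unfolding N_def by (rule exE) (rule LeastI)
    have "\<forall>m<N. \<exists>v>0. ev A c (m # xs) v"
    proof (intro allI impI)
      fix m assume "m < N"
      then have "f (m # xs) \<noteq> 0" unfolding N_def by (rule not_less_Least)
      moreover have "ev A c (m # xs) (f (m # xs))" using c l by simp
      ultimately show "\<exists>v>0. ev A c (m # xs) v" by blast
    qed
    moreover have "ev A c (N # xs) 0" using c[of "N # xs"] l z by simp
    ultimately have "ev A (Mn c) xs N" by (rule ev_mn[rotated])
    then show "ev A (Mn c) xs (LEAST n. f (n # xs) = 0)" unfolding N_def .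
  qed
qed

lemma comp_orc: "rcomp A 1 (\<lambda>xs. if A (xs!0) then 1 else 0)"
  unfolding rcomp_def
  apply (intro exI[of _ Orc] allI impI)
  subgoal for xs using ev_orc[of A "xs!0" "[]"] by (cases xs) auto
  done

lemma computable_in_comp: "computable_in A f \<longleftrightarrow> rcomp A 1 (\<lambda>xs. f (xs!0))"
  unfolding computable_in_def rcomp_def
  apply auto
  subgoal for c by (intro exI[of _ c]) (auto simp: length_Suc_conv)
  subgoal for c by (intro exI[of _ c]) (metis One_nat_def length_Cons list.size(3) nth_Cons_0)
  done

lemma comp_pr1: "rcomp A 1 (\<lambda>xs. g (xs!0)) \<Longrightarrow> rcomp A 3 (\<lambda>xs. h (xs!0) (xs!1) (xs!2)) \<Longrightarrow>
  rcomp A 2 (\<lambda>xs. rec_nat (g (xs!1)) (\<lambda>m r. h m r (xs!1)) (xs!0))"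
proof -
  assume a: "rcomp A 1 (\<lambda>xs. g (xs!0))" "rcomp A 3 (\<lambda>xs. h (xs!0) (xs!1) (xs!2))"
  have "rcomp A (Suc 1) (\<lambda>xs. rec_nat (g (tl xs ! 0)) (\<lambda>m r. h ((m # r # tl xs)!0) ((m # r # tl xs)!1) ((m # r # tl xs)!2)) (hd xs))"
    by (rule comp_pr) (use a in \<open>auto simp: numeral_3_eq_3\<close>)
  then have "rcomp A (Suc 1) (\<lambda>xs. rec_nat (g (xs!1)) (\<lambda>m r. h m r (xs!1)) (xs!0))"
    by (rule comp_cong) (auto simp: length_Suc_conv)
  then show ?thesis by (simp add: numeral_2_eq_2)
qed

lemma comp_pr0: "rcomp A 2 (\<lambda>xs. h (xs!0) (xs!1)) \<Longrightarrow>
  rcomp A 1 (\<lambda>xs. rec_nat a h (xs!0))"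
proof -
  assume a: "rcomp A 2 (\<lambda>xs. h (xs!0) (xs!1))"
  have "rcomp A (Suc 0) (\<lambda>xs. rec_nat a (\<lambda>m r. h ((m # r # tl xs)!0) ((m # r # tl xs)!1)) (hd xs))"
    by (rule comp_pr[OF comp_const]) (use a in \<open>auto simp: numeral_2_eq_2\<close>)
  then have "rcomp A (Suc 0) (\<lambda>xs. rec_nat a h (xs!0))"
    by (rule comp_cong) (auto simp: length_Suc_conv)
  then show ?thesis by simp
qed

lemma comp_suc0: "rcomp A 1 (\<lambda>xs. Suc (xs!0))"
  unfolding rcomp_def
  apply (intro exI[of _ Suc_f] allI impI)
  subgoal for xs by (cases xs) (auto intro: ev.intros)
  done

lemma rc_const[intro]: "rcomp A k (\<lambda>_. n)" by (rule comp_const)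
lemma rc_proj[intro]: "i < k \<Longrightarrow> rcomp A k (\<lambda>xs. xs ! i)" by (rule comp_proj)

lemma rc_suc[intro]: "rcomp A k f \<Longrightarrow> rcomp A k (\<lambda>xs. Suc (f xs))"
  by (rule comp1[OF comp_suc0])

lemma rn_plus: "rec_nat x (\<lambda>m r. Suc r) n = n + x" by (induct n) auto
lemma rn_mult: "rec_nat 0 (\<lambda>m r. r + x) n = n * x" by (induct n) auto
lemma rn_pred: "rec_nat 0 (\<lambda>m r. m) n = n - 1" by (induct n) auto
lemma rn_minus: "rec_nat x (\<lambda>m r. r - Suc 0) n = x - n" by (induct n) auto

lemma base_plus: "rcomp A 2 (\<lambda>xs. xs!0 + xs!1)"
proof -
  have "rcomp A 3 (\<lambda>xs. Suc (xs!1))" by (intro rc_suc rc_proj) simp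
  moreover have "rcomp A 1 (\<lambda>xs. xs!0)" by (rule rc_proj, simp)
  ultimately have "rcomp A 2 (\<lambda>xs. rec_nat (xs!1) (\<lambda>m r. Suc r) (xs!0))"
    using comp_pr1[of A "\<lambda>x. x" "\<lambda>m r x. Suc r"] by simp
  then show ?thesis by (rule comp_cong) (simp add: rn_plus)
qed

lemma rc_plus[intro]: "rcomp A k f \<Longrightarrow> rcomp A k g \<Longrightarrow> rcomp A k (\<lambda>xs. f xs + g xs)"
  by (rule comp2[OF base_plus])

lemma base_mult: "rcomp A 2 (\<lambda>xs. xs!0 * xs!1)"
proof -
  have "rcomp A 3 (\<lambda>xs. xs!1 + xs!2)" by (intro rc_plus rc_proj) simp_all
  moreover have "rcomp A 1 (\<lambda>xs. 0)" by (rule rc_const)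
  ultimately have "rcomp A 2 (\<lambda>xs. rec_nat 0 (\<lambda>m r. r + xs!1) (xs!0))"
    using comp_pr1[of A "\<lambda>x. 0" "\<lambda>m r x. r + x"] by simp
  then show ?thesis by (rule comp_cong) (simp add: rn_mult)
qed

lemma rc_mult[intro]: "rcomp A k f \<Longrightarrow> rcomp A k g \<Longrightarrow> rcomp A k (\<lambda>xs. f xs * g xs)"
  by (rule comp2[OF base_mult])

lemma base_pred: "rcomp A 1 (\<lambda>xs. xs!0 - 1)"
proof -
  have "rcomp A 1 (\<lambda>xs. rec_nat 0 (\<lambda>m r. m) (xs!0))"
    by (rule comp_pr0) (rule rc_proj, simp)
  then show ?thesis by (rule comp_cong) (simp add: rn_pred)
qed

lemma base_minus: "rcomp A 2 (\<lambda>xs. xs!1 - xs!0)"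
proof -
  have "rcomp A 3 (\<lambda>xs. xs!1 - 1)" by (rule comp1[OF base_pred]) (rule rc_proj, simp)
  moreover have "rcomp A 1 (\<lambda>xs. xs!0)" by (rule rc_proj, simp)
  ultimately have "rcomp A 2 (\<lambda>xs. rec_nat (xs!1) (\<lambda>m r. r - 1) (xs!0))"
    using comp_pr1[of A "\<lambda>x. x" "\<lambda>m r x. r - 1"] by simp
  then show ?thesis by (rule comp_cong) (simp add: rn_minus)
qed

lemma rc_minus[intro]: "rcomp A k f \<Longrightarrow> rcomp A k g \<Longrightarrow> rcomp A k (\<lambda>xs. f xs - g xs)"
  using comp2[OF base_minus, of A k g f] by simp

definition rcompP :: "(nat \<Rightarrow> bool) \<Rightarrow> nat \<Rightarrow> (nat list \<Rightarrow> bool) \<Rightarrow> bool" where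
  "rcompP A k P \<longleftrightarrow> rcomp A k (\<lambda>xs. if P xs then 1 else 0)"

lemma rc_if[intro]: "rcompP A k P \<Longrightarrow> rcomp A k f \<Longrightarrow> rcomp A k g \<Longrightarrow>
   rcomp A k (\<lambda>xs. if P xs then f xs else g xs)"
proof -
  assume "rcompP A k P" "rcomp A k f" "rcomp A k g"
  then have "rcomp A k (\<lambda>xs. (if P xs then 1 else 0) * f xs + (1 - (if P xs then 1 else 0)) * g xs)"
    unfolding rcompP_def by (intro rc_plus rc_mult rc_minus rc_const)
  then show ?thesis by (rule comp_cong) auto
qed

lemma rcP_less[intro]: "rcomp A k f \<Longrightarrow> rcomp A k g \<Longrightarrow> rcompP A k (\<lambda>xs. f xs < g xs)"
proof -
  assume "rcomp A k f" "rcomp A k g"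
  then have "rcomp A k (\<lambda>xs. 1 - (1 - (g xs - f xs)))" by (intro rc_minus rc_const)
  then show ?thesis unfolding rcompP_def by (rule comp_cong) auto
qed

lemma rcP_not[intro]: "rcompP A k P \<Longrightarrow> rcompP A k (\<lambda>xs. \<not> P xs)"
proof -
  assume "rcompP A k P"
  then have "rcomp A k (\<lambda>xs. 1 - (if P xs then 1 else 0))" unfolding rcompP_def by (intro rc_minus rc_const)
  then show ?thesis unfolding rcompP_def by (rule comp_cong) auto
qed

lemma rcP_and[intro]: "rcompP A k P \<Longrightarrow> rcompP A k Q \<Longrightarrow> rcompP A k (\<lambda>xs. P xs \<and> Q xs)"
proof -
  assume "rcompP A k P" "rcompP A k Q"
  then have "rcomp A k (\<lambda>xs. (if P xs then 1 else 0) * (if Q xs then 1 else 0))" unfolding rcompP_def by (intro rc_mult)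
  then show ?thesis unfolding rcompP_def by (rule comp_cong) auto
qed

lemma rcP_or[intro]: "rcompP A k P \<Longrightarrow> rcompP A k Q \<Longrightarrow> rcompP A k (\<lambda>xs. P xs \<or> Q xs)"
proof -
  assume "rcompP A k P" "rcompP A k Q"
  then have "rcompP A k (\<lambda>xs. \<not> (\<not> P xs \<and> \<not> Q xs))" by (intro rcP_not rcP_and)
  then show ?thesis by simp
qed

lemma rcP_le[intro]: "rcomp A k f \<Longrightarrow> rcomp A k g \<Longrightarrow> rcompP A k (\<lambda>xs. f xs \<le> g xs)"
proof -
  assume "rcomp A k f" "rcomp A k g"
  then have "rcompP A k (\<lambda>xs. \<not> g xs < f xs)" by (intro rcP_not rcP_less)
  then show ?thesis by (simp add: not_less)
qed

lemma rcP_eq[intro]: "rcomp A k f \<Longrightarrow> rcomp A k g \<Longrightarrow> rcompP A k (\<lambda>xs. f xs = g xs)"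
proof -
  assume "rcomp A k f" "rcomp A k g"
  then have "rcompP A k (\<lambda>xs. f xs \<le> g xs \<and> g xs \<le> f xs)" by (intro rcP_and rcP_le)
  then show ?thesis by (simp add: eq_iff)
qed

lemma rc_least: "rcompP A (Suc k) P \<Longrightarrow> (\<And>xs. length xs = k \<Longrightarrow> \<exists>n. P (n # xs)) \<Longrightarrow>
  rcomp A k (\<lambda>xs. LEAST n. P (n # xs))"
proof -
  assume a: "rcompP A (Suc k) P" and e: "\<And>xs. length xs = k \<Longrightarrow> \<exists>n. P (n # xs)"
  have r: "rcomp A (Suc k) (\<lambda>xs. 1 - (if P xs then 1 else 0))" using a unfolding rcompP_def by (intro rc_minus comp_const)
  have ex: "\<exists>n. 1 - (if P (n # xs) then 1 else 0) = (0::nat)" if "length xs = k" for xs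
    using e[OF that] by auto
  have "rcomp A k (\<lambda>xs. LEAST n. 1 - (if P (n # xs) then 1 else 0) = (0::nat))"
    by (rule comp_mn[of A k "\<lambda>xs. 1 - (if P xs then 1 else 0)", OF r ex])
  then show ?thesis by (rule comp_cong) (auto split: if_splits)
qed

lemma rc_rec: "rcomp A k g \<Longrightarrow> rcomp A (Suc (Suc k)) (\<lambda>ys. h (ys!0) (ys!1) (drop 2 ys)) \<Longrightarrow> rcomp A k f \<Longrightarrow>
  rcomp A k (\<lambda>xs. rec_nat (g xs) (\<lambda>m r. h m r xs) (f xs))"
proof -
  assume a: "rcomp A k g" "rcomp A (Suc (Suc k)) (\<lambda>ys. h (ys!0) (ys!1) (drop 2 ys))" "rcomp A k f"
  have P: "rcomp A (Suc k) (\<lambda>xs. rec_nat (g (tl xs)) (\<lambda>m r. h ((m # r # tl xs)!0) ((m # r # tl xs)!1) (drop 2 (m # r # tl xs))) (hd xs))"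
    by (rule comp_pr[OF a(1) a(2)])
  have "rcomp A k (\<lambda>xs. (\<lambda>ys. rec_nat (g (tl ys)) (\<lambda>m r. h ((m # r # tl ys)!0) ((m # r # tl ys)!1) (drop 2 (m # r # tl ys))) (hd ys)) (map (\<lambda>g. g xs) (f # map (\<lambda>i xs. xs!i) [0..<k])))"
    by (rule comp_cn) (use P a(3) comp_proj in auto)
  then show ?thesis
    by (rule comp_cong) (simp add: o_def, metis map_nth)
qed

lemma base_least1: "rcompP A 2 (\<lambda>ys. P (ys!0) (ys!1)) \<Longrightarrow> (\<And>x. \<exists>n. P n x) \<Longrightarrow>
   rcomp A 1 (\<lambda>xs. LEAST n. P n (xs!0))"
proof -
  assume a: "rcompP A 2 (\<lambda>ys. P (ys!0) (ys!1))" and e: "\<And>x. \<exists>n. P n x"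
  have "rcomp A 1 (\<lambda>xs. LEAST n. (\<lambda>ys. P (ys!0) (ys!1)) (n # xs))"
    by (rule rc_least) (use a e in \<open>auto simp: numeral_2_eq_2\<close>)
  then show ?thesis by simp
qed

lemma div2_least: "(LEAST m. n < Suc (Suc (2*m))) = n div (2::nat)"
  by (rule Least_equality) auto

lemma base_div2: "rcomp A 1 (\<lambda>xs. xs!0 div 2)"
proof -
  have "rcomp A 1 (\<lambda>xs. LEAST m. xs!0 < 2*m + 2)"
    apply (rule base_least1[of A "\<lambda>m x. x < 2*m+2"])
    prefer 2 subgoal for x by (rule exI[of _ x]) simp
    by (intro rcP_less rc_plus rc_mult rc_proj rc_const) auto
  then show ?thesis by (simp add: div2_least)
qed

lemma rc_div2[intro]: "rcomp A k f \<Longrightarrow> rcomp A k (\<lambda>xs. f xs div 2)"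
  by (rule comp1[OF base_div2])

lemma rc_triangle[intro]: "rcomp A k f \<Longrightarrow> rcomp A k (\<lambda>xs. triangle (f xs))"
  unfolding triangle_def by (intro rc_div2 rc_mult rc_suc)

lemma rc_prod_encode[intro]: "rcomp A k f \<Longrightarrow> rcomp A k g \<Longrightarrow> rcomp A k (\<lambda>xs. prod_encode (f xs, g xs))"
  unfolding prod_encode_def by (simp, intro rc_plus rc_triangle)

definition tri_root :: "nat \<Rightarrow> nat" where "tri_root z = (LEAST k. z < triangle (Suc k))"

lemma tri_root_ex: "\<exists>k. z < triangle (Suc k)"
proof -
  have "z \<le> triangle z" by (induct z) auto
  then show ?thesis by (intro exI[of _ z]) auto
qed

lemma tri_root: "triangle (tri_root z) \<le> z" "z < triangle (Suc (tri_root z))"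
proof -
  show "z < triangle (Suc (tri_root z))" unfolding tri_root_def using tri_root_ex by (rule LeastI_ex)
  show "triangle (tri_root z) \<le> z"
  proof (cases "tri_root z")
    case 0 then show ?thesis by simp
  next
    case (Suc k)
    then have "\<not> z < triangle (Suc k)" unfolding tri_root_def
      by (metis Suc_n_not_le_n not_less_Least tri_root_def le_refl lessI)
    then show ?thesis using Suc by simp
  qed
qed

lemma prod_decode_tri: "prod_decode z = (z - triangle (tri_root z), tri_root z - (z - triangle (tri_root z)))"
proof -
  define k where "k = tri_root z"
  define m where "m = z - triangle k"
  have z: "z = triangle k + m" "m \<le> k" using tri_root[of z] unfolding k_def m_def by auto
  have "prod_decode z = prod_decode_aux k m" using z(1) by (simp add: prod_decode_triangle_add)
  also have "\<dots> = (m, k - m)" using z(2) by (simp add: prod_decode_aux.simps)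
  finally show ?thesis unfolding m_def k_def .
qed

lemma base_tri_root: "rcomp A 1 (\<lambda>xs. tri_root (xs!0))"
proof -
  have "rcomp A 1 (\<lambda>xs. LEAST k. xs!0 < triangle (Suc k))"
    apply (rule base_least1[of A "\<lambda>k x. x < triangle (Suc k)"])
    prefer 2 apply (rule tri_root_ex)
    by (intro rcP_less rc_triangle rc_suc rc_proj) auto
  then show ?thesis by (simp add: tri_root_def)
qed

lemma rc_tri_root[intro]: "rcomp A k f \<Longrightarrow> rcomp A k (\<lambda>xs. tri_root (f xs))"
  by (rule comp1[OF base_tri_root])

lemma rc_fst_decode[intro]: "rcomp A k f \<Longrightarrow> rcomp A k (\<lambda>xs. fst (prod_decode (f xs)))"
  unfolding prod_decode_tri by (simp, intro rc_minus rc_triangle rc_tri_root)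

lemma rc_snd_decode[intro]: "rcomp A k f \<Longrightarrow> rcomp A k (\<lambda>xs. snd (prod_decode (f xs)))"
  unfolding prod_decode_tri by (simp, intro rc_minus rc_triangle rc_tri_root)

lemma rn_pow: "rec_nat (Suc 0) (\<lambda>m r. r * 2) n = 2 ^ n" by (induct n) auto

lemma rc_pow2[intro]: "rcomp A k f \<Longrightarrow> rcomp A k (\<lambda>xs. 2 ^ f xs)"
proof -
  assume f: "rcomp A k f"
  have "rcomp A k (\<lambda>xs. rec_nat 1 (\<lambda>m r. (\<lambda>m r xs. r * 2) m r xs) (f xs))"
    by (rule rc_rec[OF comp_const _ f]) (intro rc_mult rc_proj rc_const, simp)
  then show ?thesis by (simp add: rn_pow)
qed

definition hdc :: "nat \<Rightarrow> nat" where "hdc x = fst (prod_decode (x - 1))"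
definition tlc :: "nat \<Rightarrow> nat" where "tlc x = snd (prod_decode (x - 1))"

lemma hdc_cons[simp]: "hdc (list_encode (a # l)) = a" by (simp add: hdc_def)
lemma tlc_cons[simp]: "tlc (list_encode (a # l)) = list_encode l" by (simp add: tlc_def)

lemma rc_hdc[intro]: "rcomp A k f \<Longrightarrow> rcomp A k (\<lambda>xs. hdc (f xs))"
  unfolding hdc_def by (intro rc_fst_decode rc_minus rc_const)
lemma rc_tlc[intro]: "rcomp A k f \<Longrightarrow> rcomp A k (\<lambda>xs. tlc (f xs))"
  unfolding tlc_def by (intro rc_snd_decode rc_minus rc_const)

lemma encode_inj: "encode c1 = encode c2 \<Longrightarrow> c1 = c2"
proof (induction c1 arbitrary: c2)
  case (Cn f gs)
  then show ?case
  proof (cases c2)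
    case (Cn f' gs')
    with Cn.prems have e: "encode f = encode f'" "map encode gs = map encode gs'"
      by (auto simp: list_encode_eq)
    have "f = f'" using Cn.IH(1) e(1) by blast
    moreover have "gs = gs'" using Cn.IH(2) e(2)
    proof (induction gs arbitrary: gs')
      case Nil then show ?case by simp
    next
      case (Cons g gs) then show ?case by (cases gs') auto
    qed
    ultimately show ?thesis using Cn by simp
  qed auto
qed (case_tac c2; auto)+

lemma halting_iff: "halting (encode c) \<longleftrightarrow> (\<exists>r. ev (\<lambda>_. False) c [encode c] r)"
  unfolding halting_def using encode_inj by blast

lemma ev_Cn_iff: "ev A (Cn f gs) xs r \<longleftrightarrow> (\<exists>ys. list_all2 (\<lambda>g y. ev A g xs y) gs ys \<and> ev A f ys r)"
  by (auto elim: ev.cases intro: ev.intros)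

lemma ev_Mn_iff: "ev A (Mn f) xs n \<longleftrightarrow> ev A f (n # xs) 0 \<and> (\<forall>m<n. \<exists>v>0. ev A f (m # xs) v)"
  by (auto elim: ev.cases intro: ev.intros)

lemma ev_Proj_iff: "ev A (Proj i) xs r \<longleftrightarrow> i < length xs \<and> r = xs ! i"
  by (auto elim: ev.cases intro: ev.intros)

lemma Mn_halts: assumes tot: "\<And>s. ev A f (s # xs) (g s)"
  shows "(\<exists>r. ev A (Mn f) xs r) \<longleftrightarrow> (\<exists>s. g s = 0)"
proof
  assume "\<exists>r. ev A (Mn f) xs r"
  then obtain r where "ev A f (r # xs) 0" by (auto simp: ev_Mn_iff)
  then have "g r = 0" using tot ev_det by metis
  then show "\<exists>s. g s = 0" ..
next
  assume "\<exists>s. g s = 0"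
  then have ex: "\<exists>s. g s = 0" .
  define n where "n = (LEAST s. g s = 0)"
  have "g n = 0" unfolding n_def using ex by (rule LeastI_ex)
  moreover have "\<forall>m<n. g m \<noteq> 0" unfolding n_def using not_less_Least by blast
  ultimately have "ev A (Mn f) xs n"
    unfolding ev_Mn_iff using tot by (metis neq0_conv)
  then show "\<exists>r. ev A (Mn f) xs r" ..
qed

lemma halting_undec: "\<not> computable_in (\<lambda>_. False) (\<lambda>x. if halting x then 1 else 0)"
proof
  assume "computable_in (\<lambda>_. False) (\<lambda>x. if halting x then 1 else 0)"
  then obtain ch where ch: "\<And>x. ev (\<lambda>_. False) ch [x] (if halting x then 1 else 0)"
    unfolding computable_in_def by blast
  define D where "D = Mn (Cn ch [Proj 1])"
  have tot: "ev (\<lambda>_. False) (Cn ch [Proj 1]) (s # [e]) (if halting e then 1 else 0)" for s e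
    unfolding ev_Cn_iff by (intro exI[of _ "[e]"]) (auto simp: ev_Proj_iff ch)
  have "(\<exists>r. ev (\<lambda>_. False) D [e] r) \<longleftrightarrow> \<not> halting e" for e
    unfolding D_def using Mn_halts[OF tot] by simp
  from this[of "encode D"] show False unfolding halting_iff[symmetric] by blast
qed

lemma encode_Kc: "encode (Kc n) = rec_nat (prod_encode (0,0)) (\<lambda>m r. prod_encode (4, prod_encode (prod_encode (1,0), Suc (prod_encode (r, 0))))) n"
  by (induct n) auto

lemma rc_encK[intro]: "rcomp A k f \<Longrightarrow> rcomp A k (\<lambda>xs. encode (Kc (f xs)))"
proof -
  assume f: "rcomp A k f"
  have "rcomp A k (\<lambda>xs. rec_nat (prod_encode (0,0)) (\<lambda>m r. (\<lambda>m r xs. prod_encode (4, prod_encode (prod_encode (1,0), Suc (prod_encode (r, 0))))) m r xs) (f xs))"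
    by (rule rc_rec[OF comp_const _ f]) (intro rc_prod_encode rc_suc rc_proj rc_const, simp)
  then show ?thesis unfolding encode_Kc by simp
qed

lemma query_prog:
  assumes G: "rcomp (\<lambda>_. False) 5 (\<lambda>ys. g (ys!0) (ys!2) (ys!3) (ys!4))"
  shows "\<exists>F. (\<forall>A. rcomp A 3 (\<lambda>xs. F (xs!0) (xs!1) (xs!2))) \<and>
             (\<forall>x y z. halting (F x y z) \<longleftrightarrow> (\<exists>s. g s x y z = 0))"
proof -
  from G obtain cG where cG: "\<And>ys. length ys = 5 \<Longrightarrow> ev (\<lambda>_. False) cG ys (g (ys!0) (ys!2) (ys!3) (ys!4))"
    unfolding rcomp_def by blast
  define Q where "Q x y z = Mn (Cn cG [Proj 0, Proj 1, Kc x, Kc y, Kc z])" for x y z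
  define F where "F x y z = encode (Q x y z)" for x y z
  have tot: "ev (\<lambda>_. False) (Cn cG [Proj 0, Proj 1, Kc x, Kc y, Kc z]) (s # [e]) (g s x y z)" for s e x y z
    unfolding ev_Cn_iff
    using cG[of "[s, e, x, y, z]"]
    by (intro exI[of _ "[s, e, x, y, z]"]) (auto simp: ev_Proj_iff ev_Kc numeral_eq_Suc)
  have H: "halting (F x y z) \<longleftrightarrow> (\<exists>s. g s x y z = 0)" for x y z
    unfolding F_def halting_iff Q_def using Mn_halts[OF tot] by simp
  have C: "rcomp A 3 (\<lambda>xs. F (xs!0) (xs!1) (xs!2))" for A
    unfolding F_def Q_def
    by (simp, intro rc_prod_encode rc_suc rc_const rc_encK rc_proj) auto
  show ?thesis using H C by blast
qed

definition revstep :: "nat \<Rightarrow> nat" where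
  "revstep r = (if fst (prod_decode r) = 0 then r
     else prod_encode (tlc (fst (prod_decode r)), Suc (prod_encode (hdc (fst (prod_decode r)), snd (prod_decode r)))))"

definition revc :: "nat \<Rightarrow> nat" where
  "revc x = snd (prod_decode (rec_nat (prod_encode (x, 0)) (\<lambda>m r. revstep r) x))"

lemma rec_funpow: "rec_nat a (\<lambda>m r. f r) n = (f ^^ n) a"
  by (induct n) auto

lemma le_prod_encode2: "y \<le> prod_encode (x, y)"
proof -
  have "n \<le> triangle n" for n by (induct n) auto
  then show ?thesis unfolding prod_encode_def by (metis case_prod_conv le_add2 le_trans le_add1 trans_le_add1)
qed

lemma length_le_encode: "length l \<le> list_encode l"
  by (induct l) (auto intro: le_trans[OF _ le_prod_encode2])

lemma revstep_iter: "length l \<le> k \<Longrightarrow>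
  (revstep ^^ k) (prod_encode (list_encode l, list_encode acc)) = prod_encode (0, list_encode (rev l @ acc))"
proof (induction l arbitrary: k acc)
  case Nil
  have "(revstep ^^ k) (prod_encode (0, list_encode acc)) = prod_encode (0, list_encode acc)"
    by (induct k) (auto simp: revstep_def)
  then show ?case by simp
next
  case (Cons a l)
  then obtain k' where k: "k = Suc k'" "length l \<le> k'" by (cases k) auto
  have "(revstep ^^ k) (prod_encode (list_encode (a # l), list_encode acc)) =
        (revstep ^^ k') (revstep (prod_encode (list_encode (a # l), list_encode acc)))"
    using k by (simp add: funpow_swap1)
  also have "revstep (prod_encode (list_encode (a # l), list_encode acc)) = prod_encode (list_encode l, list_encode (a # acc))"
    by (simp add: revstep_def del: list_encode.simps(2)) (simp add: hdc_def tlc_def)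
  also have "(revstep ^^ k') \<dots> = prod_encode (0, list_encode (rev l @ a # acc))"
    using Cons.IH k by blast
  finally show ?case by simp
qed

lemma revc_encode[simp]: "revc (list_encode l) = list_encode (rev l)"
  unfolding revc_def rec_funpow using revstep_iter[OF length_le_encode, of l "[]"] by simp

lemma rc_revstep[intro]: "rcomp A k f \<Longrightarrow> rcomp A k (\<lambda>xs. revstep (f xs))"
  unfolding revstep_def by (intro rc_if rcP_eq rc_fst_decode rc_snd_decode rc_prod_encode rc_tlc rc_hdc rc_suc rc_const)

lemma rc_revc[intro]: "rcomp A k f \<Longrightarrow> rcomp A k (\<lambda>xs. revc (f xs))"
proof -
  assume f: "rcomp A k f"
  have "rcomp A k (\<lambda>xs. rec_nat (prod_encode (f xs, 0)) (\<lambda>m r. (\<lambda>m r xs. revstep r) m r xs) (f xs))"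
    by (rule rc_rec[OF _ _ f]) (use f in \<open>intro rc_prod_encode rc_const rc_revstep rc_proj, auto\<close>)
  then show ?thesis unfolding revc_def by (intro rc_snd_decode) simp
qed

lemma ce_fix: "rcomp A 1 (\<lambda>xs. F (xs!0)) \<Longrightarrow> ce_in A {x. x = F x}"
proof -
  assume F: "rcomp A 1 (\<lambda>xs. F (xs!0))"
  have F2: "rcomp A 2 (\<lambda>ys. F (ys!1))" by (rule comp1[OF F]) (rule rc_proj, simp)
  have "rcomp A 2 (\<lambda>ys. if ys!1 = F (ys!1) then 0 else 1)"
    by (intro rc_if rcP_eq rc_proj rc_const F2) auto
  then obtain c where c: "\<And>ys. length ys = 2 \<Longrightarrow> ev A c ys (if ys!1 = F (ys!1) then 0 else 1)"
    unfolding rcomp_def by blast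
  have tot: "ev A c (s # [x]) (if x = F x then 0 else 1)" for s x using c[of "[s,x]"] by simp
  show ?thesis unfolding ce_in_def
    by (intro exI[of _ "Mn c"] allI) (simp add: Mn_halts[OF tot])
qed

lemma rcP_halting: "computable_in A (\<lambda>x. if halting x then 1 else 0) \<Longrightarrow> rcomp A k f \<Longrightarrow>
   rcompP A k (\<lambda>xs. halting (f xs))"
  unfolding rcompP_def computable_in_comp by (rule comp1)

lemma floor_half: "\<lfloor>x\<rfloor> = \<lfloor>2 * x\<rfloor> div 2" for x :: real
proof -
  define f where "f = \<lfloor>2 * x\<rfloor>"
  define g where "g = f div 2"
  have fr: "f = 2 * g + f mod 2" "0 \<le> f mod 2" "f mod 2 \<le> 1" unfolding g_def by auto
  have "of_int f \<le> 2 * x" "2 * x < of_int f + 1" unfolding f_def by linarith+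
  moreover have e: "real_of_int f = 2 * real_of_int g + real_of_int (f mod 2)"
    using arg_cong[OF fr(1), of real_of_int] by simp
  moreover have "0 \<le> real_of_int (f mod 2)" "real_of_int (f mod 2) \<le> 1" using fr(2,3) by linarith+
  ultimately have "of_int g \<le> x" "x < of_int g + 1" by linarith+
  then show ?thesis unfolding g_def[symmetric] f_def[symmetric] by (intro floor_unique)
qed

definition Flr :: "real \<Rightarrow> nat \<Rightarrow> nat" where
  "Flr p n = rec_nat 0 (\<lambda>m r. 2 * r + (if pbits p m then 1 else 0)) n"

lemma Flr_eq: assumes "0 \<le> p" "p < 1" shows "int (Flr p n) = \<lfloor>p * 2 ^ n\<rfloor>"
proof (induction n)
  case 0 then show ?case using assms by (simp add: Flr_def floor_eq_iff)
next
  case (Suc n)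
  have fl: "\<lfloor>p * 2 ^ n\<rfloor> = \<lfloor>p * 2 ^ Suc n\<rfloor> div 2"
    using floor_half[of "p * 2^n"] by (simp add: algebra_simps)
  have "int (Flr p (Suc n)) = 2 * int (Flr p n) + (if pbits p n then 1 else 0)"
    by (simp add: Flr_def)
  also have "\<dots> = 2 * (\<lfloor>p * 2 ^ Suc n\<rfloor> div 2) + \<lfloor>p * 2 ^ Suc n\<rfloor> mod 2"
    unfolding Suc fl pbits_def by (auto simp: odd_iff_mod_2_eq_one even_iff_mod_2_eq_zero)
  also have "\<dots> = \<lfloor>p * 2 ^ Suc n\<rfloor>" by simp
  finally show ?case .
qed

lemma Flr_bounds: assumes "0 \<le> p" "p < 1"
  shows "real (Flr p n) \<le> p * 2 ^ n" "p * 2 ^ n < real (Flr p n) + 1" "Flr p n \<le> 2 ^ n"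
proof -
  have e: "real (Flr p n) = of_int \<lfloor>p * 2 ^ n\<rfloor>" using Flr_eq[OF assms, of n]
    by (metis of_int_of_nat_eq)
  show a: "real (Flr p n) \<le> p * 2 ^ n" "p * 2 ^ n < real (Flr p n) + 1" unfolding e by linarith+
  have "p * 2 ^ n \<le> 2 ^ n" using assms by simp
  then have "real (Flr p n) \<le> 2 ^ n" using a by linarith
  then show "Flr p n \<le> 2 ^ n" by (metis of_nat_le_iff of_nat_numeral of_nat_power)
qed

lemma mu_snoc: "mu p (\<sigma> @ [False]) = mu p \<sigma> * p" "mu p (\<sigma> @ [True]) = mu p \<sigma> * (1 - p)"
  unfolding mu_def by auto

lemma mu_pos: "0 < p \<Longrightarrow> p < 1 \<Longrightarrow> 0 < mu p \<sigma>"
  unfolding mu_def by auto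

lemma mu_le_max: assumes "0 \<le> p" "p \<le> 1" shows "mu p \<sigma> \<le> (max p (1 - p)) ^ length \<sigma>"
proof (induction \<sigma> rule: rev_induct)
  case Nil then show ?case by (simp add: mu_def)
next
  case (snoc b \<sigma>)
  have m0: "0 \<le> mu p \<sigma>" using assms unfolding mu_def by auto
  have w: "(if b then 1 - p else p) \<le> max p (1 - p)" "0 \<le> (if b then 1 - p else p)" using assms by auto
  have "mu p (\<sigma> @ [b]) = mu p \<sigma> * (if b then 1 - p else p)" by (cases b) (auto simp: mu_snoc)
  also have "\<dots> \<le> max p (1 - p) ^ length \<sigma> * max p (1 - p)"
    by (rule mult_mono[OF snoc.IH w(1) _ w(2)]) (use assms in auto)
  finally show ?case by (simp add: mult.commute)
qed

lemma code_str_snoc_mono: "code_str \<sigma> < code_str (\<sigma> @ [b])"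
proof -
  have tri: "triangle x < triangle y" if "x < y" for x y
    using that by (induct y) (auto simp: less_Suc_eq)
  have pe: "prod_encode (x, y) < prod_encode (x, y')" if "y < y'" for x y y'
    using tri[of "x + y" "x + y'"] that unfolding prod_encode_def by simp
  have "list_encode l < list_encode (l @ [v])" for l v
    by (induct l) (auto intro: pe)
  then show ?thesis unfolding code_str_def by simp
qed

lemma geom_S: "(\<Sum>i<n. (1/2::real) ^ i) = 2 - 2 * (1/2) ^ n"
  by (induct n) auto

definition qf :: "(nat \<Rightarrow> nat) \<Rightarrow> (nat \<Rightarrow> nat) \<Rightarrow> (nat \<Rightarrow> nat) \<Rightarrow> bstring \<Rightarrow> nat \<Rightarrow> real" where
  "qf a b d \<sigma> s = (real (a (prod_encode (code_str \<sigma>, s))) - real (b (prod_encode (code_str \<sigma>, s))))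
                      / real (Suc (d (prod_encode (code_str \<sigma>, s))))"

definition Qry :: "(nat \<Rightarrow> nat) \<Rightarrow> (nat \<Rightarrow> nat) \<Rightarrow> (nat \<Rightarrow> nat) \<Rightarrow> nat \<Rightarrow> nat \<Rightarrow> nat \<Rightarrow> bool" where
  "Qry a b d c N E \<longleftrightarrow> (\<exists>s. N * Suc (d (prod_encode (c, s))) + b (prod_encode (c, s)) * 2 ^ E
                              < a (prod_encode (c, s)) * 2 ^ E)"

definition R0 :: "real \<Rightarrow> nat \<Rightarrow> nat" where "R0 p n = Flr p n + 1"
definition R1 :: "real \<Rightarrow> nat \<Rightarrow> nat" where "R1 p n = 2 ^ n - Flr p n"
definition Expo :: "nat \<Rightarrow> nat" where "Expo n = triangle n - n"

lemma Expo_Suc: "Expo (Suc n) = Expo n + n"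
proof -
  have "n \<le> triangle n" by (induct n) auto
  then show ?thesis unfolding Expo_def by simp
qed

definition stp :: "(nat \<Rightarrow> nat) \<Rightarrow> (nat \<Rightarrow> nat) \<Rightarrow> (nat \<Rightarrow> nat) \<Rightarrow> real \<Rightarrow> nat \<Rightarrow> bool list \<times> nat" where
  "stp a b d p n = rec_nat ([], 1) (\<lambda>n st. if Qry a b d (code_str (fst st @ [False])) (snd st * R0 p n) (Expo n + n)
      then (fst st @ [True], snd st * R1 p n) else (fst st @ [False], snd st * R0 p n)) n"

lemma stp_0[simp]: "stp a b d p 0 = ([], 1)" by (simp add: stp_def)
lemma stp_Suc: "stp a b d p (Suc n) = (let st = stp a b d p n in
   if Qry a b d (code_str (fst st @ [False])) (snd st * R0 p n) (Expo n + n)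
      then (fst st @ [True], snd st * R1 p n) else (fst st @ [False], snd st * R0 p n))"
  by (simp add: stp_def Let_def)

lemma stp_len: "length (fst (stp a b d p n)) = n"
  by (induct n) (auto simp: stp_Suc Let_def)

lemma stp_snoc: "\<exists>bt. fst (stp a b d p (Suc n)) = fst (stp a b d p n) @ [bt]"
  by (auto simp: stp_Suc Let_def)

definition yseq :: "(nat \<Rightarrow> nat) \<Rightarrow> (nat \<Rightarrow> nat) \<Rightarrow> (nat \<Rightarrow> nat) \<Rightarrow> real \<Rightarrow> nat \<Rightarrow> bool" where
  "yseq a b d p n = fst (stp a b d p (Suc n)) ! n"

lemma stp_prefix: "m \<le> n \<Longrightarrow> take m (fst (stp a b d p n)) = fst (stp a b d p m)"
proof (induction n)
  case 0 then show ?case by simp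
next
  case (Suc n)
  show ?case
  proof (cases "m = Suc n")
    case True then show ?thesis using stp_len by simp
  next
    case False
    then have "m \<le> n" using Suc by simp
    moreover obtain bt where "fst (stp a b d p (Suc n)) = fst (stp a b d p n) @ [bt]" using stp_snoc by blast
    ultimately show ?thesis using Suc.IH stp_len[of a b d p n] by simp
  qed
qed

lemma prefix_yseq: "prefix (yseq a b d p) n = fst (stp a b d p n)"
proof -
  have "prefix (yseq a b d p) n = map (\<lambda>i. fst (stp a b d p n) ! i) [0..<n]"
    unfolding prefix_def yseq_def
  proof (intro map_cong refl)
    fix i assume "i \<in> set [0..<n]"
    then have i: "i < n" by simp
    have "fst (stp a b d p (Suc i)) = take (Suc i) (fst (stp a b d p n))"
      using stp_prefix[of "Suc i" n] i by simp
    then show "fst (stp a b d p (Suc i)) ! i = fst (stp a b d p n) ! i" using i by simp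
  qed
  also have "\<dots> = fst (stp a b d p n)" using map_nth[of "fst (stp a b d p n)"] stp_len[of a b d p n] by simp
  finally show ?thesis .
qed

context
  fixes p :: real and M :: "bstring \<Rightarrow> real" and a b d :: "nat \<Rightarrow> nat"
  assumes p0: "0 < p" and p1: "p < 1" and sm: "semimeasure M"
    and lim: "\<And>\<sigma>. incseq (qf a b d \<sigma>) \<and> qf a b d \<sigma> \<longlonglongrightarrow> M \<sigma>"
begin

lemma M_gt_iff: "c < M \<sigma> \<longleftrightarrow> (\<exists>s. c < qf a b d \<sigma> s)"
proof
  assume "c < M \<sigma>"
  then have "\<forall>\<^sub>F s in sequentially. c < qf a b d \<sigma> s" using lim[of \<sigma>] order_tendstoD(1) by blast
  then show "\<exists>s. c < qf a b d \<sigma> s" by (metis eventually_sequentially order_refl)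
next
  assume "\<exists>s. c < qf a b d \<sigma> s"
  then obtain s where "c < qf a b d \<sigma> s" by blast
  moreover have "qf a b d \<sigma> s \<le> M \<sigma>" using lim[of \<sigma>] by (blast intro: incseq_le)
  ultimately show "c < M \<sigma>" by linarith
qed

lemma Qry_iff: "Qry a b d (code_str \<sigma>) N E \<longleftrightarrow> real N / 2 ^ E < M \<sigma>"
proof -
  have "(N * Suc (d z) + b z * 2 ^ E < a z * 2 ^ E) \<longleftrightarrow>
        real N / 2 ^ E < (real (a z) - real (b z)) / real (Suc (d z))" for z
  proof -
    have "(N * Suc (d z) + b z * 2 ^ E < a z * 2 ^ E) \<longleftrightarrow>
          real N * real (Suc (d z)) + real (b z) * 2 ^ E < real (a z) * 2 ^ E"
      by (metis (mono_tags, opaque_lifting) of_nat_add of_nat_less_iff of_nat_mult of_nat_numeral of_nat_power)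
    also have "\<dots> \<longleftrightarrow> real N / 2 ^ E < (real (a z) - real (b z)) / real (Suc (d z))"
      by (simp add: field_simps del: of_nat_Suc)
    finally show ?thesis .
  qed
  then show ?thesis unfolding Qry_def M_gt_iff qf_def by simp
qed

definition tval :: "nat \<Rightarrow> real" where "tval n = real (snd (stp a b d p n)) / 2 ^ Expo n"

lemma fl_div: "real (Flr p n) / 2 ^ n \<le> p" "p - (1/2)^n < real (Flr p n) / 2 ^ n"
proof -
  have pos: "0 < (2::real) ^ n" by simp
  show "real (Flr p n) / 2 ^ n \<le> p" using Flr_bounds(1)[of p n] p0 p1 by (simp add: pos_divide_le_eq[OF pos])
  have e: "(p - (1/2)^n) * 2 ^ n = p * 2 ^ n - 1" by (simp add: left_diff_distrib power_one_over)
  show "p - (1/2)^n < real (Flr p n) / 2 ^ n" unfolding pos_less_divide_eq[OF pos] e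
    using Flr_bounds(2)[of p n] p0 p1 by linarith
qed

lemma r0_bounds: "p \<le> real (R0 p n) / 2 ^ n" "real (R0 p n) / 2 ^ n \<le> p + (1/2) ^ n"
proof -
  have e: "real (R0 p n) / 2 ^ n = real (Flr p n) / 2 ^ n + (1/2) ^ n"
    by (simp add: R0_def add_divide_distrib power_one_over)
  show "p \<le> real (R0 p n) / 2 ^ n" unfolding e using fl_div[of n] by linarith
  show "real (R0 p n) / 2 ^ n \<le> p + (1/2) ^ n" unfolding e using fl_div[of n] by linarith
qed

lemma r1_bounds: "1 - p \<le> real (R1 p n) / 2 ^ n" "real (R1 p n) / 2 ^ n \<le> 1 - p + (1/2) ^ n"
proof -
  have r: "real (R1 p n) = 2 ^ n - real (Flr p n)" using Flr_bounds(3)[of p n] p0 p1 unfolding R1_def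
    by (simp add: of_nat_diff)
  have e: "real (R1 p n) / 2 ^ n = 1 - real (Flr p n) / 2 ^ n"
    unfolding r by (simp add: diff_divide_distrib)
  show "1 - p \<le> real (R1 p n) / 2 ^ n" unfolding e using fl_div[of n] by linarith
  show "real (R1 p n) / 2 ^ n \<le> 1 - p + (1/2) ^ n" unfolding e using fl_div[of n] by linarith
qed

lemma tval_Suc:
  "tval (Suc n) = tval n * (if Qry a b d (code_str (fst (stp a b d p n) @ [False])) (snd (stp a b d p n) * R0 p n) (Expo n + n)
      then real (R1 p n) / 2 ^ n else real (R0 p n) / 2 ^ n)"
  unfolding tval_def stp_Suc Let_def Expo_Suc by (auto simp: power_add)

lemma fst_stp_Suc:
  "fst (stp a b d p (Suc n)) = fst (stp a b d p n) @ [Qry a b d (code_str (fst (stp a b d p n) @ [False])) (snd (stp a b d p n) * R0 p n) (Expo n + n)]"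
  unfolding stp_Suc Let_def by auto

lemma Qry_stp: "Qry a b d (code_str (fst (stp a b d p n) @ [False])) (snd (stp a b d p n) * R0 p n) (Expo n + n)
  \<longleftrightarrow> tval n * (real (R0 p n) / 2 ^ n) < M (fst (stp a b d p n) @ [False])"
  unfolding Qry_iff tval_def by (simp add: power_add)

lemma inv_M: "M (fst (stp a b d p n)) \<le> tval n"
proof (induction n)
  case 0 then show ?case using sm unfolding semimeasure_def tval_def Expo_def by simp
next
  case (Suc n)
  define \<sigma> where "\<sigma> = fst (stp a b d p n)"
  define t where "t = tval n"
  define r0 where "r0 = real (R0 p n) / 2 ^ n"
  define r1 where "r1 = real (R1 p n) / 2 ^ n"
  have t0: "0 \<le> t" unfolding t_def tval_def by simp
  have sms: "M (\<sigma> @ [False]) + M (\<sigma> @ [True]) \<le> M \<sigma>" using sm unfolding semimeasure_def by blast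
  have IH: "M \<sigma> \<le> t" using Suc.IH unfolding \<sigma>_def t_def .
  show ?case
  proof (cases "t * r0 < M (\<sigma> @ [False])")
    case True
    have "p \<le> r0" using r0_bounds(1)[of n] unfolding r0_def .
    then have "t * p \<le> t * r0" using t0 by (rule mult_left_mono)
    then have "M (\<sigma> @ [True]) \<le> t * (1 - p)" using True sms IH by (simp add: algebra_simps)
    also have "1 - p \<le> r1" using r1_bounds(1)[of n] unfolding r1_def .
    then have "t * (1 - p) \<le> t * r1" using t0 by (rule mult_left_mono)
    finally show ?thesis using True unfolding fst_stp_Suc tval_Suc Qry_stp
      by (simp add: \<sigma>_def t_def r0_def r1_def)
  next
    case False
    then show ?thesis unfolding fst_stp_Suc tval_Suc Qry_stp
      by (simp add: \<sigma>_def t_def r0_def r1_def)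
  qed
qed

definition del :: real where "del = min p (1 - p)"

lemma ratio: "tval n \<le> exp ((\<Sum>i<n. (1/2) ^ i) / del) * mu p (fst (stp a b d p n))"
proof (induction n)
  case 0 then show ?case by (simp add: tval_def Expo_def mu_def)
next
  case (Suc n)
  define \<sigma> where "\<sigma> = fst (stp a b d p n)"
  define K where "K = exp ((\<Sum>i<n. (1/2::real) ^ i) / del)"
  define x where "x = (1/2::real) ^ n"
  have d0: "0 < del" unfolding del_def using p0 p1 by simp
  have key: "r \<le> w * exp (x / del)" if "r \<le> w + x" "del \<le> w" for r w
  proof -
    have "w + x \<le> w * (1 + x / del)"
    proof -
      have "x \<le> w * (x / del)" using that(2) d0 unfolding x_def
        by (simp add: field_simps mult_right_mono)
      then show ?thesis by (simp add: algebra_simps)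
    qed
    also have "\<dots> \<le> w * exp (x / del)"
      using that(2) d0 by (intro mult_left_mono) (auto simp: exp_ge_add_one_self add.commute)
    finally show ?thesis using that(1) by linarith
  qed
  have KS: "exp ((\<Sum>i<Suc n. (1/2) ^ i) / del) = K * exp (x / del)"
    unfolding K_def x_def by (simp add: add_divide_distrib exp_add)
  have t0: "0 \<le> tval n" unfolding tval_def by simp
  have K0: "0 \<le> K" unfolding K_def by simp
  have IH: "tval n \<le> K * mu p \<sigma>" using Suc.IH unfolding K_def \<sigma>_def .
  have Km: "0 \<le> K * mu p \<sigma>" using K0 mu_pos[OF p0 p1, of \<sigma>] by simp
  have step: "tval n * r \<le> K * mu p \<sigma> * (w * exp (x / del))" if "r \<le> w + x" "del \<le> w" "0 \<le> r" for r w
    by (rule mult_mono[OF IH key[OF that(1,2)] Km that(3)])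
  show ?case
  proof (cases "Qry a b d (code_str (fst (stp a b d p n) @ [False])) (snd (stp a b d p n) * R0 p n) (Expo n + n)")
    case True
    have "tval (Suc n) = tval n * (real (R1 p n) / 2 ^ n)" unfolding tval_Suc using True by simp
    also have "\<dots> \<le> K * mu p \<sigma> * ((1 - p) * exp (x / del))"
      by (rule step) (use r1_bounds[of n] in \<open>auto simp: x_def del_def\<close>)
    also have "\<dots> = exp ((\<Sum>i<Suc n. (1/2) ^ i) / del) * mu p (fst (stp a b d p (Suc n)))"
      unfolding KS fst_stp_Suc using True by (simp add: mu_snoc \<sigma>_def)
    finally show ?thesis .
  next
    case False
    have "tval (Suc n) = tval n * (real (R0 p n) / 2 ^ n)" unfolding tval_Suc using False by simp
    also have "\<dots> \<le> K * mu p \<sigma> * (p * exp (x / del))"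
      by (rule step) (use r0_bounds[of n] in \<open>auto simp: x_def del_def\<close>)
    also have "\<dots> = exp ((\<Sum>i<Suc n. (1/2) ^ i) / del) * mu p (fst (stp a b d p (Suc n)))"
      unfolding KS fst_stp_Suc using False by (simp add: mu_snoc \<sigma>_def)
    finally show ?thesis .
  qed
qed

lemma M_bound: "M (fst (stp a b d p n)) \<le> exp (2 / del) * mu p (fst (stp a b d p n))"
proof -
  have d0: "0 < del" unfolding del_def using p0 p1 by simp
  have "(\<Sum>i<n. (1/2::real) ^ i) \<le> 2" unfolding geom_S by simp
  then have "exp ((\<Sum>i<n. (1/2::real) ^ i) / del) \<le> exp (2 / del)" using d0 by (simp add: divide_right_mono)
  then have "exp ((\<Sum>i<n. (1/2::real) ^ i) / del) * mu p (fst (stp a b d p n)) \<le> exp (2 / del) * mu p (fst (stp a b d p n))"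
    using mu_pos[OF p0 p1] by (simp add: mult_right_mono less_imp_le)
  then show ?thesis using inv_M[of n] ratio[of n] by linarith
qed

end

lemma rc_fun[intro]: "computable_in A f \<Longrightarrow> rcomp A k g \<Longrightarrow> rcomp A k (\<lambda>xs. f (g xs))"
  unfolding computable_in_comp by (rule comp1)

definition rho0 :: "bstring \<Rightarrow> real" where "rho0 \<sigma> = (1/2) ^ code_str \<sigma>"

lemma code_str_Nil[simp]: "code_str [] = 0" by (simp add: code_str_def)

lemma rho0_lce: "left_ce_semimeasure rho0"
proof -
  have sm: "semimeasure rho0"
    unfolding semimeasure_def rho0_def
  proof (intro conjI allI)
    fix \<sigma>
    have "(1/2::real) ^ code_str (\<sigma> @ [False]) \<le> (1/2) ^ Suc (code_str \<sigma>)"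
      using code_str_snoc_mono[of \<sigma> False] by (intro power_decreasing) auto
    moreover have "(1/2::real) ^ code_str (\<sigma> @ [True]) \<le> (1/2) ^ Suc (code_str \<sigma>)"
      using code_str_snoc_mono[of \<sigma> True] by (intro power_decreasing) auto
    ultimately show "(1/2::real) ^ code_str (\<sigma> @ [False]) + (1/2) ^ code_str (\<sigma> @ [True]) \<le> (1/2) ^ code_str \<sigma>"
      by simp
  qed (auto simp: power_le_one)
  have ca: "computable_in (\<lambda>_. False) (\<lambda>_. 1)" unfolding computable_in_comp by (rule rc_const)
  have cb: "computable_in (\<lambda>_. False) (\<lambda>_. 0)" unfolding computable_in_comp by (rule rc_const)
  have cd: "computable_in (\<lambda>_. False) (\<lambda>x. 2 ^ fst (prod_decode x) - 1)" unfolding computable_in_comp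
    by (intro rc_minus rc_pow2 rc_fst_decode rc_proj rc_const) simp
  have "left_ce rho0" unfolding left_ce_def
  proof (intro exI conjI allI, rule ca, rule cb, rule cd)
    fix \<sigma>
    have e: "(real 1 - real 0) / real (Suc (2 ^ fst (prod_decode (prod_encode (code_str \<sigma>, s))) - 1)) = rho0 \<sigma>" for s
      by (simp add: rho0_def power_one_over of_nat_diff)
    show "let q = \<lambda>s. (real 1 - real 0) / real (Suc (2 ^ fst (prod_decode (prod_encode (code_str \<sigma>, s))) - 1)) in
           incseq q \<and> q \<longlonglongrightarrow> rho0 \<sigma>"
      unfolding Let_def e by (simp add: incseq_def)
  qed
  then show ?thesis using sm unfolding left_ce_semimeasure_def by simp
qed

lemma M_pos: "universal_semimeasure M \<Longrightarrow> 0 < M \<sigma>"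
proof -
  assume "universal_semimeasure M"
  then obtain c where c: "c > 0" "\<And>\<sigma>. M \<sigma> \<ge> c * rho0 \<sigma>"
    using rho0_lce unfolding universal_semimeasure_def by blast
  have "0 < c * rho0 \<sigma>" using c(1) by (simp add: rho0_def)
  then show ?thesis using c(2)[of \<sigma>] by linarith
qed

lemma pbits_triv: "p = 0 \<or> p = 1 \<Longrightarrow> pbits p = (\<lambda>_. False)"
proof
  fix n assume "p = 0 \<or> p = 1"
  moreover have "\<lfloor>(2::real) ^ Suc n\<rfloor> = 2 ^ Suc n" by (metis floor_of_int of_int_numeral of_int_power)
  ultimately show "pbits p n = False" unfolding pbits_def by auto
qed

definition bitn :: "bool \<Rightarrow> nat" where "bitn bt = (if bt then 1 else 0)"

lemma code_str_bitn: "code_str \<sigma> = list_encode (map bitn \<sigma>)"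
  unfolding code_str_def bitn_def ..

definition gq :: "(nat \<Rightarrow> nat) \<Rightarrow> (nat \<Rightarrow> nat) \<Rightarrow> (nat \<Rightarrow> nat) \<Rightarrow> nat \<Rightarrow> nat \<Rightarrow> nat \<Rightarrow> nat \<Rightarrow> nat" where
  "gq a b d s c N E = (if N * Suc (d (prod_encode (c, s))) + b (prod_encode (c, s)) * 2 ^ E
                              < a (prod_encode (c, s)) * 2 ^ E then 0 else 1)"

lemma query_exists:
  assumes "computable_in (\<lambda>_. False) a" "computable_in (\<lambda>_. False) b" "computable_in (\<lambda>_. False) d"
  shows "\<exists>F. (\<forall>A. rcomp A 3 (\<lambda>xs. F (xs!0) (xs!1) (xs!2))) \<and>
             (\<forall>x y z. halting (F x y z) \<longleftrightarrow> Qry a b d x y z)"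
proof -
  have "rcomp (\<lambda>_. False) 5 (\<lambda>ys. gq a b d (ys!0) (ys!2) (ys!3) (ys!4))"
    unfolding gq_def
    by (intro rc_if rcP_less rc_plus rc_mult rc_suc rc_pow2 rc_fun[OF assms(1)] rc_fun[OF assms(2)]
          rc_fun[OF assms(3)] rc_prod_encode rc_proj rc_const) auto
  from query_prog[OF this] obtain F where F: "\<forall>A. rcomp A 3 (\<lambda>xs. F (xs!0) (xs!1) (xs!2))"
    "\<forall>x y z. halting (F x y z) \<longleftrightarrow> (\<exists>s. gq a b d s x y z = 0)" by blast
  have "(\<exists>s. gq a b d s x y z = 0) \<longleftrightarrow> Qry a b d x y z" for x y z
    unfolding gq_def Qry_def by auto
  then show ?thesis using F by auto
qed

lemma rc_F3: "rcomp A 3 (\<lambda>xs. F (xs!0) (xs!1) (xs!2)) \<Longrightarrow> rcomp A k f1 \<Longrightarrow> rcomp A k f2 \<Longrightarrow> rcomp A k f3 \<Longrightarrow>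
  rcomp A k (\<lambda>xs. F (f1 xs) (f2 xs) (f3 xs))"
  by (rule comp3)

lemma rc_Flr[intro]: "rcomp (pbits p) k f \<Longrightarrow> rcomp (pbits p) k (\<lambda>xs. Flr p (f xs))"
proof -
  assume f: "rcomp (pbits p) k f"
  have o: "rcomp (pbits p) (Suc (Suc k)) (\<lambda>ys. if pbits p (ys!0) then 1 else 0)"
    by (rule comp1[OF comp_orc]) (rule rc_proj, simp)
  have "rcomp (pbits p) k (\<lambda>xs. rec_nat 0 (\<lambda>m r. (\<lambda>m r xs. 2 * r + (if pbits p m then 1 else 0)) m r xs) (f xs))"
    by (rule rc_rec[OF comp_const _ f]) (simp, intro rc_plus rc_mult rc_const rc_proj o, simp)
  then show ?thesis unfolding Flr_def by simp
qed

lemma rc_R0[intro]: "rcomp (pbits p) k f \<Longrightarrow> rcomp (pbits p) k (\<lambda>xs. R0 p (f xs))"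
  unfolding R0_def by (intro rc_plus rc_Flr rc_const)
lemma rc_R1[intro]: "rcomp (pbits p) k f \<Longrightarrow> rcomp (pbits p) k (\<lambda>xs. R1 p (f xs))"
  unfolding R1_def by (intro rc_minus rc_Flr rc_pow2)
lemma rc_Ex[intro]: "rcomp A k f \<Longrightarrow> rcomp A k (\<lambda>xs. Expo (f xs))"
  unfolding Expo_def by (intro rc_minus rc_triangle)

definition stc :: "(nat \<Rightarrow> nat) \<Rightarrow> (nat \<Rightarrow> nat) \<Rightarrow> (nat \<Rightarrow> nat) \<Rightarrow> real \<Rightarrow> nat \<Rightarrow> nat" where
  "stc a b d p n = prod_encode (list_encode (map bitn (rev (fst (stp a b d p n)))), snd (stp a b d p n))"

definition stepc :: "(nat \<Rightarrow> nat \<Rightarrow> nat \<Rightarrow> nat) \<Rightarrow> real \<Rightarrow> nat \<Rightarrow> nat \<Rightarrow> nat" where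
  "stepc F p m r = (if halting (F (revc (Suc (prod_encode (0, fst (prod_decode r))))) (snd (prod_decode r) * R0 p m) (Expo m + m))
     then prod_encode (Suc (prod_encode (1, fst (prod_decode r))), snd (prod_decode r) * R1 p m)
     else prod_encode (Suc (prod_encode (0, fst (prod_decode r))), snd (prod_decode r) * R0 p m))"

lemma stc_Suc: assumes FQ: "\<And>x y z. halting (F x y z) \<longleftrightarrow> Qry a b d x y z"
  shows "stc a b d p (Suc n) = stepc F p n (stc a b d p n)"
proof -
  define L where "L = fst (stp a b d p n)"
  define T where "T = snd (stp a b d p n)"
  have rv: "revc (Suc (prod_encode (0, list_encode (map bitn (rev L))))) = code_str (L @ [False])"
  proof -
    have "revc (Suc (prod_encode (0, list_encode (map bitn (rev L))))) = revc (list_encode (0 # map bitn (rev L)))" by simp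
    also have "\<dots> = list_encode (map bitn L @ [0])" by (simp only: revc_encode) (simp add: rev_map)
    finally show ?thesis by (simp add: code_str_bitn bitn_def)
  qed
  show ?thesis
    unfolding stc_def stepc_def stp_Suc Let_def L_def[symmetric] T_def[symmetric] rv FQ
    by (simp add: bitn_def rv)
qed

lemma stc_rec: assumes FQ: "\<And>x y z. halting (F x y z) \<longleftrightarrow> Qry a b d x y z"
  shows "stc a b d p n = rec_nat (prod_encode (0, 1)) (\<lambda>m r. stepc F p m r) n"
proof (induct n)
  case 0 show ?case by (simp add: stc_def)
next
  case (Suc n) then show ?case by (simp add: stc_Suc[OF FQ])
qed

lemma rc_stc:
  assumes FQ: "\<And>x y z. halting (F x y z) \<longleftrightarrow> Qry a b d x y z"
    and Fc: "rcomp (pbits p) 3 (\<lambda>xs. F (xs!0) (xs!1) (xs!2))"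
    and hred: "computable_in (pbits p) (\<lambda>x. if halting x then 1 else 0)"
    and f: "rcomp (pbits p) k f"
  shows "rcomp (pbits p) k (\<lambda>xs. stc a b d p (f xs))"
proof -
  have h: "rcomp (pbits p) (Suc (Suc k)) (\<lambda>ys. stepc F p (ys!0) (ys!1))"
    unfolding stepc_def
    by (intro rc_if rcP_halting[OF hred] rc_F3[OF Fc] rc_revc rc_suc rc_prod_encode rc_fst_decode rc_snd_decode
          rc_mult rc_R0 rc_R1 rc_plus rc_Ex rc_proj rc_const) auto
  have "rcomp (pbits p) k (\<lambda>xs. rec_nat (prod_encode (0, 1)) (\<lambda>m r. (\<lambda>m r xs. stepc F p m r) m r xs) (f xs))"
    by (rule rc_rec[OF comp_const _ f]) (use h in simp)
  then show ?thesis unfolding stc_rec[OF FQ] by simp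
qed

lemma revc_stc: "revc (fst (prod_decode (stc a b d p n))) = code_str (fst (stp a b d p n))"
  unfolding stc_def by (simp add: code_str_bitn rev_map)

lemma main_case:
  assumes U: "universal_semimeasure M" and p0: "0 < p" and p1: "p < 1"
    and hred0: "turing_le halting (pbits p)"
  shows "\<exists>y. y \<notin> mlr p \<and>
           (\<exists>c::real. \<forall>n. KA M (prefix y n) \<ge> - log 2 (mu p (prefix y n)) - c)"
proof -
  have hred: "computable_in (pbits p) (\<lambda>x. if halting x then 1 else 0)"
    using hred0 unfolding turing_le_def .
  have lce: "left_ce M" and sm: "semimeasure M"
    using U unfolding universal_semimeasure_def left_ce_semimeasure_def by auto
  obtain a b d where ca: "computable_in (\<lambda>_. False) a" and cb: "computable_in (\<lambda>_. False) b"
    and cd: "computable_in (\<lambda>_. False) d"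
    and lim0: "\<And>\<sigma>. let q = (\<lambda>s. (real (a (prod_encode (code_str \<sigma>, s))) - real (b (prod_encode (code_str \<sigma>, s))))
                      / real (Suc (d (prod_encode (code_str \<sigma>, s))))) in incseq q \<and> q \<longlonglongrightarrow> M \<sigma>"
    using lce unfolding left_ce_def by blast
  have qe: "qf a b d \<sigma> = (\<lambda>s. (real (a (prod_encode (code_str \<sigma>, s))) - real (b (prod_encode (code_str \<sigma>, s))))
                      / real (Suc (d (prod_encode (code_str \<sigma>, s)))))" for \<sigma>
    by (rule ext) (simp add: qf_def)
  have lim: "\<And>\<sigma>. incseq (qf a b d \<sigma>) \<and> qf a b d \<sigma> \<longlonglongrightarrow> M \<sigma>"
    using lim0 unfolding qe Let_def by blast
  have Mpos: "\<And>\<sigma>. 0 < M \<sigma>" using M_pos[OF U] .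
  obtain F where Fc: "\<And>A. rcomp A 3 (\<lambda>xs. F (xs!0) (xs!1) (xs!2))"
    and FQ: "\<And>x y z. halting (F x y z) \<longleftrightarrow> Qry a b d x y z"
    using query_exists[OF ca cb cd] by blast
  define y where "y = yseq a b d p"
  define K where "K = exp (2 / del p)"
  have K0: "0 < K" unfolding K_def by simp
  have KA: "KA M (prefix y n) \<ge> - log 2 (mu p (prefix y n)) - log 2 K" for n
  proof -
    define L where "L = fst (stp a b d p n)"
    have pf: "prefix y n = L" unfolding y_def L_def by (rule prefix_yseq)
    have mb: "M L \<le> K * mu p L" unfolding L_def K_def by (rule M_bound[OF p0 p1 sm lim])
    have mp: "0 < mu p L" by (rule mu_pos[OF p0 p1])
    have "log 2 (M L) \<le> log 2 (K * mu p L)" using log_mono[of 2 "M L" "K * mu p L"] Mpos[of L] mb by simp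
    also have "\<dots> = log 2 K + log 2 (mu p L)" using K0 mp by (rule log_mult_pos)
    finally show ?thesis unfolding pf KA_def by linarith
  qed
  define mx where "mx = max p (1 - p)"
  have mx1: "mx < 1" "0 \<le> mx" unfolding mx_def using p0 p1 by auto
  obtain m0 where m0: "mx ^ m0 < 1/2" using real_arch_pow_inv[of "1/2" mx] mx1 by auto
  define Uk where "Uk k = {fst (stp a b d p (m0 * k))}" for k
  define Fz where "Fz x = prod_encode (fst (prod_decode x), revc (fst (prod_decode (stc a b d p (m0 * fst (prod_decode x))))))" for x
  have setq: "{prod_encode (k, code_str \<sigma>) | k \<sigma>. \<sigma> \<in> Uk k} = {x. x = Fz x}"
  proof (intro set_eqI iffI)
    fix x assume "x \<in> {prod_encode (k, code_str \<sigma>) | k \<sigma>. \<sigma> \<in> Uk k}"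
    then obtain k where "x = prod_encode (k, code_str (fst (stp a b d p (m0 * k))))" unfolding Uk_def by blast
    then show "x \<in> {x. x = Fz x}" unfolding Fz_def by (simp add: revc_stc)
  next
    fix x assume "x \<in> {x. x = Fz x}"
    then have "x = Fz x" by simp
    then have "x = prod_encode (fst (prod_decode x), code_str (fst (stp a b d p (m0 * fst (prod_decode x)))))"
      unfolding Fz_def revc_stc .
    then show "x \<in> {prod_encode (k, code_str \<sigma>) | k \<sigma>. \<sigma> \<in> Uk k}" unfolding Uk_def by blast
  qed
  have rFz: "rcomp (pbits p) 1 (\<lambda>xs. Fz (xs!0))"
    unfolding Fz_def
    by (intro rc_prod_encode rc_fst_decode rc_revc rc_stc[OF FQ Fc hred] rc_mult rc_const rc_proj) auto
  have ce: "ce_in (pbits p) {prod_encode (k, code_str \<sigma>) | k \<sigma>. \<sigma> \<in> Uk k}"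
    unfolding setq by (rule ce_fix[OF rFz])
  have meas: "open_measure_le p (Uk k) ((1/2) ^ k)" for k
    unfolding open_measure_le_def
  proof (intro allI impI)
    fix Fs :: "bstring set" assume Fs: "finite Fs" "Fs \<subseteq> Uk k" "prefix_free Fs"
    define \<tau> where "\<tau> = fst (stp a b d p (m0 * k))"
    have "Fs = {} \<or> Fs = {\<tau>}" using Fs unfolding Uk_def \<tau>_def by blast
    then have "(\<Sum>\<sigma>\<in>Fs. mu p \<sigma>) \<le> mu p \<tau>" using mu_pos[OF p0 p1, of \<tau>] by auto
    also have "\<dots> \<le> mx ^ (m0 * k)" using mu_le_max[of p \<tau>] p0 p1 unfolding \<tau>_def mx_def stp_len by simp
    also have "\<dots> = (mx ^ m0) ^ k" by (simp add: power_mult)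
    also have "\<dots> \<le> (1/2) ^ k" using m0 mx1 by (intro power_mono) auto
    finally show "(\<Sum>\<sigma>\<in>Fs. mu p \<sigma>) \<le> (1/2) ^ k" .
  qed
  have test: "martin_loef_test p Uk" unfolding martin_loef_test_def using ce meas by blast
  have cover: "\<forall>k. \<exists>n. prefix y n \<in> Uk k"
  proof
    fix k show "\<exists>n. prefix y n \<in> Uk k"
      by (rule exI[of _ "m0 * k"]) (simp add: y_def prefix_yseq Uk_def)
  qed
  have "y \<notin> mlr p" unfolding mlr_def using test cover by blast
  then show ?thesis using KA by blast
qed

theorem mainTheorem16:
  fixes p :: real and M :: "bstring \<Rightarrow> real"
  assumes "universal_semimeasure M"
    and "0 \<le> p" and "p \<le> 1"
    and "turing_le halting (pbits p)"
  shows "\<exists>y. y \<notin> mlr p \<and>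
           (\<exists>c::real. \<forall>n. KA M (prefix y n) \<ge> - log 2 (mu p (prefix y n)) - c)"
proof (cases "p = 0 \<or> p = 1")
  case True
  then have "pbits p = (\<lambda>_. False)" by (rule pbits_triv)
  then show ?thesis using assms(4) halting_undec unfolding turing_le_def by simp
next
  case False
  then have "0 < p" "p < 1" using assms(2,3) by auto
  then show ?thesis using main_case assms(1,4) by blast
qed

end
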